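(* Let $n\ge1$. Let $\mathbf{R}$ be a subalgebra of $\mathbf{P\L}_n\times\mathbf{P\L}_n$ with $\mathbf{R}\subseteq{\le}$. Assume $\mathbf{R}$ is not equal to the diagonal $\Delta_{\mathbf{S}}=\{(s,s):s\in S\}$ of any subalgebra $\mathbf{S}$ of $\mathbf{P\L}_n$. Put $S=\mathrm{pr}_1(\mathbf{R})\times\mathrm{pr}_2(\mathbf{R})$. Then $$\lhd\cap S\;\subseteq\;\mathbf{R}\;\subseteq\;{\le}\cap S.$$
   Context: For $n\ge 1$, the algebra $\mathbf{P\L}_n=\langle\{0,\tfrac1n,\dots,\tfrac{n-1}{n},1\},\wedge,\vee,\odot,\oplus,0,1\rangle$ has $\wedge=\min$, $\vee=\max$, $x\odot y=\max\{0,x+y-1\}$ and $x\oplus y=\min\{1,x+y\}$. The order is ${\le}=\{(x,y)\in\mathbf{P\L}_n^2: x\le y\}$. The relation $\lhd$ is $\lhd=\{(x,y)\in\mathbf{P\L}_n^2: x=0\text{ or }y=1\}$. Both $\le$ and $\lhd$ are subalgebras of $\mathbf{P\L}_n\times\mathbf{P\L}_n$. The maps $\mathrm{pr}_1,\mathrm{pr}_2$ are the projections. *)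

theory Defs
  imports Main "HOL.Rat"
begin

definition PL :: "nat \<Rightarrow> rat set" where
  "PL n = {of_nat k / of_nat n | k. k \<le> n}"

definition luk_odot :: "rat \<Rightarrow> rat \<Rightarrow> rat" where
  "luk_odot x y = max 0 (x + y - 1)"

definition luk_oplus :: "rat \<Rightarrow> rat \<Rightarrow> rat" where
  "luk_oplus x y = min 1 (x + y)"

definition is_subalg :: "nat \<Rightarrow> rat set \<Rightarrow> bool" where
  "is_subalg n S \<longleftrightarrow> S \<subseteq> PL n \<and> 0 \<in> S \<and> 1 \<in> S \<and>
     (\<forall>x\<in>S. \<forall>y\<in>S. min x y \<in> S \<and> max x y \<in> S \<and> luk_odot x y \<in> S \<and> luk_oplus x y \<in> S)"

definition is_subalg2 :: "nat \<Rightarrow> (rat \<times> rat) set \<Rightarrow> bool" where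
  "is_subalg2 n R \<longleftrightarrow> R \<subseteq> PL n \<times> PL n \<and> (0, 0) \<in> R \<and> (1, 1) \<in> R \<and>
     (\<forall>(x1, x2)\<in>R. \<forall>(y1, y2)\<in>R.
        (min x1 y1, min x2 y2) \<in> R \<and> (max x1 y1, max x2 y2) \<in> R \<and>
        (luk_odot x1 y1, luk_odot x2 y2) \<in> R \<and> (luk_oplus x1 y1, luk_oplus x2 y2) \<in> R)"

definition leq_rel :: "nat \<Rightarrow> (rat \<times> rat) set" where
  "leq_rel n = {(x, y). x \<in> PL n \<and> y \<in> PL n \<and> x \<le> y}"

definition lhd_rel :: "nat \<Rightarrow> (rat \<times> rat) set" where
  "lhd_rel n = {(x, y). x \<in> PL n \<and> y \<in> PL n \<and> (x = 0 \<or> y = 1)}"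

end

theory Submission
  imports Defs
begin

lemma PL_bounds: "x \<in> PL n \<Longrightarrow> n \<ge> 1 \<Longrightarrow> 0 \<le> x \<and> x \<le> 1"
  unfolding PL_def by (auto simp: divide_le_eq_1)

lemma ops:
  assumes "is_subalg2 n R" "(x1,x2) \<in> R" "(y1,y2) \<in> R"
  shows "(min x1 y1, min x2 y2) \<in> R" "(max x1 y1, max x2 y2) \<in> R"
        "(luk_odot x1 y1, luk_odot x2 y2) \<in> R" "(luk_oplus x1 y1, luk_oplus x2 y2) \<in> R"
  using assms unfolding is_subalg2_def by fastforce+

lemma lemA:
  assumes S: "is_subalg2 n R" and cR: "(c,1) \<in> R" and c: "c < 1"
  shows "(0,1) \<in> R"
proof -
  have I: "(max 0 (1 - of_nat m * (1 - c)), 1) \<in> R" for m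
  proof (induction m)
    case 0 show ?case using S unfolding is_subalg2_def by simp
  next
    case (Suc m)
    from ops(3)[OF S Suc cR]
    have "(luk_odot (max 0 (1 - of_nat m * (1 - c))) c, luk_odot 1 1) \<in> R" .
    moreover have "luk_odot (max 0 (1 - of_nat m * (1 - c))) c = max 0 (1 - of_nat (Suc m) * (1 - c))"
      using c unfolding luk_odot_def by (auto simp: algebra_simps max_def)
    ultimately show ?case by (simp add: luk_odot_def)
  qed
  obtain m where "1 < of_nat m * (1 - c)" using ex_less_of_nat_mult[of "1 - c" 1] c by auto
  hence "max 0 (1 - of_nat m * (1 - c)) = 0" by simp
  with I[of m] show ?thesis by simp
qed

lemma lemB:
  assumes S: "is_subalg2 n R" and cR: "(0,d) \<in> R" and d: "0 < d"
  shows "(0,1) \<in> R"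
proof -
  have I: "(0, min 1 (of_nat m * d)) \<in> R" for m
  proof (induction m)
    case 0 show ?case using S unfolding is_subalg2_def by simp
  next
    case (Suc m)
    from ops(4)[OF S Suc cR]
    have "(luk_oplus 0 0, luk_oplus (min 1 (of_nat m * d)) d) \<in> R" .
    moreover have "luk_oplus (min 1 (of_nat m * d)) d = min 1 (of_nat (Suc m) * d)"
      using d unfolding luk_oplus_def by (auto simp: algebra_simps min_def)
    ultimately show ?case by (simp add: luk_oplus_def)
  qed
  obtain m where "1 < of_nat m * d" using ex_less_of_nat_mult[of d 1] d by auto
  hence "min 1 (of_nat m * d) = 1" by simp
  with I[of m] show ?thesis by simp
qed

lemma lemC:
  assumes S: "is_subalg2 n R" and n: "n \<ge> 1"
  shows "\<forall>c d. (c,d) \<in> R \<longrightarrow> c < d \<longrightarrow> 1 \<le> 2^k * (d - c) \<longrightarrow> (0,1) \<in> R"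
proof (induction k)
  case 0
  show ?case
  proof (intro allI impI)
    fix c d assume cd: "(c,d) \<in> R" "c < d" "1 \<le> 2^0 * (d - c)"
    have "c \<in> PL n" "d \<in> PL n" using cd(1) S unfolding is_subalg2_def by auto
    hence "0 \<le> c" "d \<le> 1" using PL_bounds n by auto
    with cd have "c = 0" "d = 1" by auto
    with cd show "(0,1) \<in> R" by simp
  qed
next
  case (Suc k)
  show ?case
  proof (intro allI impI)
    fix c d assume cd: "(c,d) \<in> R" "c < d" "1 \<le> 2^Suc k * (d - c)"
    have "c \<in> PL n" "d \<in> PL n" using cd(1) S unfolding is_subalg2_def by auto
    hence b: "0 \<le> c" "d \<le> 1" using PL_bounds n by auto
    have g: "1 \<le> 2^k * (2*d - 2*c)" using cd(3) by (simp add: algebra_simps)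
    have g2: "1 \<le> 2^k * ((2*d - 1) - (2*c - 1))" using g by simp
    show "(0,1) \<in> R"
    proof (cases "d = 1")
      case True thus ?thesis using lemA[OF S] cd by auto
    next
      case d1: False
      show ?thesis
      proof (cases "c = 0")
        case True thus ?thesis using lemB[OF S] cd by auto
      next
        case c0: False
        show ?thesis
        proof (cases "2*d \<le> 1")
          case True
          have "(luk_oplus c c, luk_oplus d d) \<in> R" using ops(4)[OF S cd(1) cd(1)] .
          moreover have "luk_oplus c c = 2*c" "luk_oplus d d = 2*d"
            using True cd(2) unfolding luk_oplus_def by auto
          ultimately show ?thesis using Suc.IH g cd(2) by auto
        next
          case F1: False
          show ?thesis
          proof (cases "2*c \<ge> 1")
            case True
            have "(luk_odot c c, luk_odot d d) \<in> R" using ops(3)[OF S cd(1) cd(1)] .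
            moreover have "luk_odot c c = 2*c - 1" "luk_odot d d = 2*d - 1"
              using True cd(2) unfolding luk_odot_def by auto
            ultimately show ?thesis using Suc.IH g2 cd(2) by auto
          next
            case False
            have "(luk_oplus c c, luk_oplus d d) \<in> R" using ops(4)[OF S cd(1) cd(1)] .
            moreover have "luk_oplus c c = 2*c" "luk_oplus d d = 1"
              using False F1 unfolding luk_oplus_def by auto
            ultimately show ?thesis using lemA[OF S, of "2*c"] False by auto
          qed
        qed
      qed
    qed
  qed
qed

theorem lemma3p9:
  fixes n :: nat and R :: "(rat \<times> rat) set"
  assumes "n \<ge> 1"
    and "is_subalg2 n R"
    and "R \<subseteq> leq_rel n"
    and "\<forall>S. is_subalg n S \<longrightarrow> R \<noteq> {(s, s) | s. s \<in> S}"
  shows "lhd_rel n \<inter> ((fst ` R) \<times> (snd ` R)) \<subseteq> R \<and> R \<subseteq> leq_rel n \<inter> ((fst ` R) \<times> (snd ` R))"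
proof -
  note S = assms(2)
  have "\<exists>c d. (c,d) \<in> R \<and> c < d"
  proof (rule ccontr)
    assume "\<not> ?thesis"
    hence diag: "\<And>c d. (c,d) \<in> R \<Longrightarrow> c = d" using assms(3) unfolding leq_rel_def by fastforce
    have eq: "R = {(s, s) | s. s \<in> fst ` R}"
      proof
      show "R \<subseteq> {(s, s) | s. s \<in> fst ` R}"
      proof
        fix p assume "p \<in> R" thus "p \<in> {(s, s) | s. s \<in> fst ` R}"
          using diag[of "fst p" "snd p"] by (cases p) force
      qed
      show "{(s, s) | s. s \<in> fst ` R} \<subseteq> R"
      proof
        fix p assume "p \<in> {(s, s) | s. s \<in> fst ` R}"
        then obtain q where "q \<in> R" "p = (fst q, fst q)" by blast
        thus "p \<in> R" using diag[of "fst q" "snd q"] by (cases q) auto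
      qed
    qed
    have "is_subalg n (fst ` R)"
      unfolding is_subalg_def
    proof (intro conjI ballI)
      show "fst ` R \<subseteq> PL n" using S unfolding is_subalg2_def by auto
      show "0 \<in> fst ` R" "1 \<in> fst ` R" using S unfolding is_subalg2_def by force+
    next
      fix x y assume x: "x \<in> fst ` R" and y: "y \<in> fst ` R"
      hence xR: "(x,x) \<in> R" and yR: "(y,y) \<in> R" using diag by (auto simp: image_iff) (metis prod.collapse)+
      show "min x y \<in> fst ` R" using ops(1)[OF S xR yR] by force
      show "max x y \<in> fst ` R" using ops(2)[OF S xR yR] by force
      show "luk_odot x y \<in> fst ` R" using ops(3)[OF S xR yR] by force
      show "luk_oplus x y \<in> fst ` R" using ops(4)[OF S xR yR] by force
    qed
    with eq assms(4) show False by blast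
  qed
  then obtain c d where cd: "(c,d) \<in> R" "c < d" by blast
  obtain m :: nat where m: "1 < of_nat m * (d - c)" using ex_less_of_nat_mult[of "d - c" 1] cd by auto
  have "of_nat m \<le> (2::rat)^m"
  proof (induction m)
    case (Suc m)
    have "1 \<le> (2::rat)^m" by simp
    hence "1 + of_nat m \<le> (2::rat)^m + 2^m" using Suc.IH by (rule add_mono)
    thus ?case by simp
  qed simp
  hence "of_nat m * (d - c) \<le> 2^m * (d - c)" using cd(2) by (intro mult_right_mono) auto
  with m have "1 \<le> 2^m * (d - c)" by simp
  with lemC[OF S assms(1), of m] cd have R01: "(0,1) \<in> R" by blast
  have "lhd_rel n \<inter> ((fst ` R) \<times> (snd ` R)) \<subseteq> R"
  proof
    fix p assume p: "p \<in> lhd_rel n \<inter> ((fst ` R) \<times> (snd ` R))"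
    obtain a b where ab: "p = (a,b)" by force
    from p ab obtain a' b' where aR: "(a,a') \<in> R" and bR: "(b',b) \<in> R"
      by (auto simp: image_iff)
    have "a' \<in> PL n" "b' \<in> PL n" "b \<in> PL n" using aR bR S unfolding is_subalg2_def by auto
    hence bd: "0 \<le> b'" "b \<le> 1" "a' \<le> 1" using PL_bounds assms(1) by auto
    from p ab have "a = 0 \<or> b = 1" unfolding lhd_rel_def by auto
    thus "p \<in> R"
    proof
      assume "a = 0"
      with ops(1)[OF S R01 bR] bd ab show ?thesis by simp
    next
      assume "b = 1"
      have "(max 0 a, max 1 a') \<in> R" using ops(2)[OF S R01 aR] .
      moreover have "max 1 a' = 1" using bd by simp
      ultimately have "(max 0 a, 1) \<in> R" by simp
      moreover have "a \<in> PL n" using aR S unfolding is_subalg2_def by auto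
      hence "0 \<le> a" using PL_bounds assms(1) by auto
      ultimately show ?thesis using ab \<open>b = 1\<close> by simp
    qed
  qed
  moreover have "R \<subseteq> leq_rel n \<inter> ((fst ` R) \<times> (snd ` R))" using assms(3) by force
  ultimately show ?thesis by blast
qed

end
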